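(* Let $I$ DMUs have nonnegative, nonzero nominal output data $Y\in\mathbb{R}^{M\times I}$ and input data $X\in\mathbb{R}^{N\times I}$ and suppose the maximum allowed amount of box uncertainty is $\nu=\infty$. Then no DMU is incapable; that is, for every DMU $\hat\imath$ there exist $\sigma\ge0$ and perturbations $\Delta,\nabla$ with all entries in $[-\sigma,\sigma]$ and $Y+\Delta\ge0$, $X+\nabla\ge0$ such that the efficiency score of DMU $\hat\imath$ computed from the data $(Y+\Delta,X+\nabla)$ equals $1$.
   Context: Input-oriented BCC DEA: the efficiency score of DMU $k$ with data $(X,Y)$ is $\min\{\theta: Y\lambda\ge y^k,\ X\lambda\le\theta x^k,\ e^T\lambda=1,\ \lambda\ge0\}$, $e$ the all-ones vector. A DMU is capable under box uncertainty with bound $\nu$ if, for some amount $\sigma\in[0,\nu]$, some realisation of the data within the box of size $\sigma$ (every entry within $\sigma$ of its nominal value, data kept nonnegative) makes its efficiency score equal to $1$; it is incapable otherwise. *)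

theory Defs
  imports Complex_Main "HOL-Library.Extended_Real"
begin

text \<open>Data matrices are functions on indices: Y m i (m < M outputs), X n i (n < N inputs),
  DMUs i < I.\<close>

definition bcc_feasible ::
  "(nat \<Rightarrow> nat \<Rightarrow> real) \<Rightarrow> (nat \<Rightarrow> nat \<Rightarrow> real) \<Rightarrow> nat \<Rightarrow> nat \<Rightarrow> nat \<Rightarrow> nat \<Rightarrow> real \<Rightarrow> bool" where
  "bcc_feasible X Y N M I k \<theta> \<longleftrightarrow>
     (\<exists>lam::nat \<Rightarrow> real.
        (\<forall>i<I. lam i \<ge> 0) \<and> (\<Sum>i<I. lam i) = 1 \<and>
        (\<forall>m<M. (\<Sum>i<I. Y m i * lam i) \<ge> Y m k) \<and>
        (\<forall>n<N. (\<Sum>i<I. X n i * lam i) \<le> \<theta> * X n k))"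

definition bcc_eff ::
  "(nat \<Rightarrow> nat \<Rightarrow> real) \<Rightarrow> (nat \<Rightarrow> nat \<Rightarrow> real) \<Rightarrow> nat \<Rightarrow> nat \<Rightarrow> nat \<Rightarrow> nat \<Rightarrow> real" where
  "bcc_eff X Y N M I k = Inf {\<theta>. bcc_feasible X Y N M I k \<theta>}"

definition capable ::
  "(nat \<Rightarrow> nat \<Rightarrow> real) \<Rightarrow> (nat \<Rightarrow> nat \<Rightarrow> real) \<Rightarrow> nat \<Rightarrow> nat \<Rightarrow> nat \<Rightarrow> ereal \<Rightarrow> nat \<Rightarrow> bool" where
  "capable X Y N M I \<nu> k \<longleftrightarrow>
     (\<exists>\<sigma>::real. 0 \<le> \<sigma> \<and> ereal \<sigma> \<le> \<nu> \<and>
       (\<exists>D E :: nat \<Rightarrow> nat \<Rightarrow> real.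
          (\<forall>m<M. \<forall>i<I. \<bar>D m i\<bar> \<le> \<sigma> \<and> Y m i + D m i \<ge> 0) \<and>
          (\<forall>n<N. \<forall>i<I. \<bar>E n i\<bar> \<le> \<sigma> \<and> X n i + E n i \<ge> 0) \<and>
          bcc_eff (\<lambda>n i. X n i + E n i) (\<lambda>m i. Y m i + D m i) N M I k = 1))"

end

theory Submission
  imports Defs
begin

lemma lam_point:
  fixes lam :: "nat \<Rightarrow> real"
  assumes k: "k < I" and nn: "\<forall>i<I. lam i \<ge> 0" and s: "(\<Sum>i<I. lam i) = 1" and lk: "lam k \<ge> 1"
  shows "\<forall>i<I. i \<noteq> k \<longrightarrow> lam i = 0"
proof (intro allI impI)
  fix i assume i: "i < I" "i \<noteq> k"
  have "(\<Sum>i<I. lam i) = lam k + (\<Sum>j\<in>{..<I}-{k}. lam j)"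
    using k by (simp add: sum.remove)
  also have "(\<Sum>j\<in>{..<I}-{k}. lam j) = lam i + (\<Sum>j\<in>{..<I}-{k}-{i}. lam j)"
    using i by (subst sum.remove[of _ i]) auto
  finally have "lam i + (\<Sum>j\<in>{..<I}-{k}-{i}. lam j) \<le> 0" using s lk by linarith
  moreover have "(\<Sum>j\<in>{..<I}-{k}-{i}. lam j) \<ge> 0" using nn by (intro sum_nonneg) auto
  ultimately show "lam i = 0" using nn i by force
qed

theorem theorem2:
  fixes X Y :: "nat \<Rightarrow> nat \<Rightarrow> real" and N M I :: nat
  assumes Ynn: "\<forall>m<M. \<forall>i<I. Y m i \<ge> 0"
    and Xnn: "\<forall>n<N. \<forall>i<I. X n i \<ge> 0"
    and Ynz: "\<exists>m<M. \<exists>i<I. Y m i \<noteq> 0"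
    and Xnz: "\<exists>n<N. \<exists>i<I. X n i \<noteq> 0"
  shows "\<forall>k<I. capable X Y N M I \<infinity> k"
proof (intro allI impI)
  fix k assume k: "k < I"
  from Ynz obtain m0 where m0: "m0 < M" by blast
  from Xnz obtain n0 where n0: "n0 < N" by blast
  define s where "s = 1 + (\<Sum>m<M. \<Sum>i<I. Y m i)"
  have Yle: "Y m i \<le> s" if "m < M" "i < I" for m i
  proof -
    have "Y m i \<le> (\<Sum>i<I. Y m i)" using Ynn that by (intro member_le_sum) auto
    also have "\<dots> \<le> (\<Sum>m<M. \<Sum>i<I. Y m i)" using Ynn that
      by (intro member_le_sum[where f="\<lambda>m. \<Sum>i<I. Y m i"]) (auto intro: sum_nonneg)
    finally show ?thesis unfolding s_def by linarith
  qed
  have s1: "s \<ge> 1" unfolding s_def using Ynn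
    by (smt (verit) lessThan_iff sum_nonneg)
  define D where "D m i = (if i = k then 1 else - Y m i)" for m i
  define E :: "nat \<Rightarrow> nat \<Rightarrow> real" where "E n i = 1" for n i
  let ?X = "\<lambda>n i. X n i + E n i" and ?Y = "\<lambda>m i. Y m i + D m i"
  have feas1: "bcc_feasible ?X ?Y N M I k 1"
    unfolding bcc_feasible_def
    by (rule exI[of _ "\<lambda>i. if i = k then 1 else 0"]) (use k in \<open>auto simp: if_distrib sum.If_cases\<close>)
  have ge1: "\<theta> \<ge> 1" if "bcc_feasible ?X ?Y N M I k \<theta>" for \<theta>
  proof -
    from that obtain lam where nn: "\<forall>i<I. lam i \<ge> 0" and sm: "(\<Sum>i<I. lam i) = 1"
      and yc: "\<forall>m<M. (\<Sum>i<I. ?Y m i * lam i) \<ge> ?Y m k"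
      and xc: "\<forall>n<N. (\<Sum>i<I. ?X n i * lam i) \<le> \<theta> * ?X n k"
      unfolding bcc_feasible_def by blast
    have "(\<Sum>i<I. ?Y m0 i * lam i) = (\<Sum>i<I. (if i = k then (Y m0 k + 1) * lam k else 0))"
      by (rule sum.cong) (auto simp: D_def)
    also have "\<dots> = (Y m0 k + 1) * lam k" using k by (simp add: sum.delta)
    finally have "(Y m0 k + 1) * lam k \<ge> Y m0 k + 1" using yc m0 by (metis (no_types, lifting) D_def add.commute)
    moreover have "Y m0 k + 1 > 0" using Ynn m0 k by force
    ultimately have lk: "lam k \<ge> 1" by simp
    have z: "\<forall>i<I. i \<noteq> k \<longrightarrow> lam i = 0" by (rule lam_point[OF k nn sm lk])
    have "(\<Sum>i<I. ?X n0 i * lam i) = (\<Sum>i<I. (if i = k then ?X n0 k * lam k else 0))"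
      by (rule sum.cong) (use z in auto)
    also have "\<dots> = ?X n0 k * lam k" using k by (simp add: sum.delta)
    finally have eqx: "(\<Sum>i<I. ?X n0 i * lam i) = ?X n0 k * lam k" .
    have "(\<Sum>i<I. ?X n0 i * lam i) \<le> \<theta> * ?X n0 k" using xc n0 by blast
    hence "?X n0 k * lam k \<le> \<theta> * ?X n0 k" unfolding eqx .
    moreover have "?X n0 k \<ge> 1" using Xnn n0 k by (simp add: E_def)
    ultimately have "?X n0 k * 1 \<le> \<theta> * ?X n0 k" using lk
      by (meson mult_left_mono order_trans zero_le_one)
    then have "1 * ?X n0 k \<le> \<theta> * ?X n0 k" by (simp only: mult.commute)
    then show ?thesis using \<open>?X n0 k \<ge> 1\<close>
      by (subst (asm) mult_le_cancel_right) auto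
  qed
  have eff: "bcc_eff ?X ?Y N M I k = 1"
    unfolding bcc_eff_def
    by (rule cInf_eq_minimum) (use feas1 ge1 in blast)+
  show "capable X Y N M I \<infinity> k"
    unfolding capable_def
  proof (intro exI conjI)
    show "0 \<le> s" using s1 by simp
    show "ereal s \<le> \<infinity>" by simp
    show "\<forall>m<M. \<forall>i<I. \<bar>D m i\<bar> \<le> s \<and> Y m i + D m i \<ge> 0"
      using Yle Ynn s1 by (auto simp: D_def)
    show "\<forall>n<N. \<forall>i<I. \<bar>E n i\<bar> \<le> s \<and> X n i + E n i \<ge> 0"
      using Xnn s1 by (auto simp: E_def)
    show "bcc_eff ?X ?Y N M I k = 1" by (rule eff)
  qed
qed

end
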